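(* Let $L=Rd$ with $R,d$ positive integers, and let $\Phi,\Psi$ be two unitary $L\times L$ matrices, partitioned into consecutive column-blocks $\Phi[\ell],\Psi[\ell]$ of size $L\times d$, $1\le \ell\le R$. Let ${\bf x}\in\mathbb{C}^L$, ${\bf x}\neq {\bf 0}$, satisfy $${\bf x}=\sum_{\ell=1}^R \Phi[\ell]{\bf a}[\ell]=\sum_{\ell=1}^R \Psi[\ell]{\bf b}[\ell]$$ with ${\bf a}[\ell],{\bf b}[\ell]\in\mathbb{C}^d$, and let $A=\|{\bf a}\|_{2,0}$, $B=\|{\bf b}\|_{2,0}$. Then $$\frac{1}{2}(A+B)\ge \sqrt{AB}\ge \frac{1}{d\,\mu_{\mathrm B}(\Phi,\Psi)},\qquad\text{where }\ \mu_{\mathrm B}(\Phi,\Psi)=\max_{\ell,r}\frac{1}{d}\rho(\Phi^H[\ell]\Psi[r]).$$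
   Context: For a matrix ${\bf M}$, $\rho({\bf M})=\lambda_{\max}^{1/2}({\bf M}^H{\bf M})$ denotes its spectral norm. For a vector ${\bf a}\in\mathbb{C}^{L}$ viewed as a concatenation of consecutive length-$d$ blocks ${\bf a}[1],\dots,{\bf a}[R]$, $\|{\bf a}\|_{2,0}$ denotes the number of indices $\ell$ with $\|{\bf a}[\ell]\|_2>0$. *)

theory Defs
  imports Complex_Main "Jordan_Normal_Form.Schur_Decomposition" "Jordan_Normal_Form.Char_Poly"
begin

(* Column block  M[l]  (0-indexed l < R): the L x d submatrix made of columns l*d .. l*d+d-1 *)
definition col_block :: "nat \<Rightarrow> complex mat \<Rightarrow> nat \<Rightarrow> complex mat" where
  "col_block d M l = mat (dim_row M) d (\<lambda>(i,j). M $$ (i, l*d + j))"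

definition vec_block :: "nat \<Rightarrow> complex vec \<Rightarrow> nat \<Rightarrow> complex vec" where
  "vec_block d a l = vec d (\<lambda>j. a $ (l*d + j))"

definition vnorm2 :: "complex vec \<Rightarrow> real" where
  "vnorm2 v = sqrt (\<Sum>j<dim_vec v. (cmod (v $ j))\<^sup>2)"

definition norm20 :: "nat \<Rightarrow> nat \<Rightarrow> complex vec \<Rightarrow> nat" where
  "norm20 R d a = card {l. l < R \<and> vnorm2 (vec_block d a l) > 0}"

definition spec_norm :: "complex mat \<Rightarrow> real" where
  "spec_norm M = sqrt (Max {\<mu>::real. eigenvalue (mat_adjoint M * M) (complex_of_real \<mu>)})"

definition block_coherence :: "nat \<Rightarrow> nat \<Rightarrow> complex mat \<Rightarrow> complex mat \<Rightarrow> real" where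
  "block_coherence R d Phi Psi =
     Max {spec_norm (mat_adjoint (col_block d Phi l) * col_block d Psi r) / real d | l r. l < R \<and> r < R}"

definition unitary_mat :: "nat \<Rightarrow> complex mat \<Rightarrow> bool" where
  "unitary_mat n U \<longleftrightarrow> U \<in> carrier_mat n n \<and> mat_adjoint U * U = 1\<^sub>m n \<and> U * mat_adjoint U = 1\<^sub>m n"

end

theory Submission
  imports Defs "HOL-Analysis.Function_Topology" "HOL-Analysis.L2_Norm" "Jordan_Normal_Form.Spectral_Radius"
begin


definition ip :: "complex vec \<Rightarrow> complex vec \<Rightarrow> complex" where
  "ip u v = (\<Sum>i<dim_vec v. cnj (u $ i) * v $ i)"

definition nrm :: "complex vec \<Rightarrow> real" where
  "nrm v = (\<Sum>i<dim_vec v. (cmod (v $ i))\<^sup>2)"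

definition qf :: "complex mat \<Rightarrow> complex vec \<Rightarrow> real" where
  "qf H v = Re (ip v (H *\<^sub>v v))"

definition hermit :: "complex mat \<Rightarrow> nat \<Rightarrow> bool" where
  "hermit H n \<longleftrightarrow> H \<in> carrier_mat n n \<and> (\<forall>i<n. \<forall>j<n. H $$ (j,i) = cnj (H $$ (i,j)))"

lemma mv_index: "A \<in> carrier_mat n m \<Longrightarrow> v \<in> carrier_vec m \<Longrightarrow> i < n \<Longrightarrow>
  (A *\<^sub>v v) $ i = (\<Sum>j<m. A $$ (i,j) * v $ j)"
  by (auto simp: scalar_prod_def atLeast0LessThan)

lemma row_sprod: "A \<in> carrier_mat n m \<Longrightarrow> v \<in> carrier_vec m \<Longrightarrow> i < n \<Longrightarrow>
  row A i \<bullet> v = (\<Sum>j<m. A $$ (i,j) * v $ j)"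
  by (auto simp: scalar_prod_def atLeast0LessThan)

lemma ip_self: "ip v v = complex_of_real (nrm v)"
  unfolding ip_def nrm_def of_real_sum
  by (intro sum.cong refl) (metis complex_norm_square mult.commute of_real_power)

lemma nrm_nonneg: "nrm v \<ge> 0"
  unfolding nrm_def by (intro sum_nonneg) auto

lemma nrm_zero: assumes "v \<in> carrier_vec n" "nrm v = 0" shows "v = 0\<^sub>v n"
proof (rule eq_vecI)
  fix i assume i: "i < dim_vec (0\<^sub>v n)"
  have "(cmod (v $ i))\<^sup>2 = 0"
    using assms i sum_nonneg_eq_0_iff[of "{..<dim_vec v}" "\<lambda>i. (cmod (v $ i))\<^sup>2"]
    unfolding nrm_def by auto
  then show "v $ i = 0\<^sub>v n $ i" using i by auto
qed (use assms in auto)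

lemma ip_conj: "u \<in> carrier_vec n \<Longrightarrow> v \<in> carrier_vec n \<Longrightarrow> ip u v = cnj (ip v u)"
  unfolding ip_def by (auto simp: mult.commute)

lemma ip_add_left: "u \<in> carrier_vec n \<Longrightarrow> v \<in> carrier_vec n \<Longrightarrow> w \<in> carrier_vec n \<Longrightarrow>
   ip (u + v) w = ip u w + ip v w"
  unfolding ip_def by (auto simp: sum.distrib algebra_simps)

lemma ip_add_right: "u \<in> carrier_vec n \<Longrightarrow> v \<in> carrier_vec n \<Longrightarrow> w \<in> carrier_vec n \<Longrightarrow>
   ip u (v + w) = ip u v + ip u w"
  unfolding ip_def by (auto simp: sum.distrib algebra_simps)

lemma ip_minus_right: "u \<in> carrier_vec n \<Longrightarrow> v \<in> carrier_vec n \<Longrightarrow> w \<in> carrier_vec n \<Longrightarrow>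
   ip u (v - w) = ip u v - ip u w"
  unfolding ip_def by (auto simp: sum_subtractf algebra_simps)

lemma ip_smult_left: "u \<in> carrier_vec n \<Longrightarrow> w \<in> carrier_vec n \<Longrightarrow>
   ip (a \<cdot>\<^sub>v u) w = cnj a * ip u w"
  unfolding ip_def by (auto simp: sum_distrib_left algebra_simps)

lemma ip_smult_right: "u \<in> carrier_vec n \<Longrightarrow> w \<in> carrier_vec n \<Longrightarrow>
   ip u (a \<cdot>\<^sub>v w) = a * ip u w"
  unfolding ip_def by (auto simp: sum_distrib_left algebra_simps)

lemma adj_carrier: "A \<in> carrier_mat m n \<Longrightarrow> mat_adjoint A \<in> carrier_mat n m"
  unfolding mat_adjoint_def by auto

lemma adj_index: "A \<in> carrier_mat m n \<Longrightarrow> i < n \<Longrightarrow> j < m \<Longrightarrow> mat_adjoint A $$ (i,j) = cnj (A $$ (j,i))"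
  unfolding mat_adjoint_def by (auto simp: mat_of_rows_def)

lemma ip_adj: assumes A: "A \<in> carrier_mat m n" and u: "u \<in> carrier_vec n" and w: "w \<in> carrier_vec m"
  shows "ip u (mat_adjoint A *\<^sub>v w) = ip (A *\<^sub>v u) w"
proof -
  have "ip u (mat_adjoint A *\<^sub>v w) = (\<Sum>i<n. cnj (u $ i) * (\<Sum>j<m. cnj (A $$ (j,i)) * w $ j))"
  proof -
    have "\<And>i. i < n \<Longrightarrow> (mat_adjoint A *\<^sub>v w) $ i = (\<Sum>j<m. cnj (A $$ (j,i)) * w $ j)"
      using mv_index[OF adj_carrier[OF A] w] adj_index[OF A] by simp
    then show ?thesis unfolding ip_def using adj_carrier[OF A] by simp
  qed
  also have "\<dots> = (\<Sum>i<n. \<Sum>j<m. cnj (u $ i) * cnj (A $$ (j,i)) * w $ j)"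
    by (simp add: sum_distrib_left mult.assoc)
  also have "\<dots> = (\<Sum>j<m. \<Sum>i<n. cnj (u $ i) * cnj (A $$ (j,i)) * w $ j)"
    by (rule sum.swap)
  also have "\<dots> = (\<Sum>j<m. cnj (\<Sum>i<n. A $$ (j,i) * u $ i) * w $ j)"
    by (intro sum.cong refl) (simp add: sum_distrib_left sum_distrib_right mult_ac)
  also have "\<dots> = ip (A *\<^sub>v u) w"
    unfolding ip_def using A u w by (auto simp: mv_index row_sprod intro!: sum.cong)
  finally show ?thesis .
qed

lemma herm_ip: assumes H: "hermit H n" and u: "u \<in> carrier_vec n" and v: "v \<in> carrier_vec n"
  shows "ip u (H *\<^sub>v v) = cnj (ip v (H *\<^sub>v u))"
proof -
  have Hc: "H \<in> carrier_mat n n" and hs: "\<And>i j. i<n \<Longrightarrow> j<n \<Longrightarrow> H $$ (j,i) = cnj (H $$ (i,j))"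
    using H unfolding hermit_def by blast+
  have "ip u (H *\<^sub>v v) = (\<Sum>i<n. \<Sum>j<n. cnj (u $ i) * H $$ (i,j) * v $ j)"
    unfolding ip_def using Hc u v by (auto simp: mv_index row_sprod sum_distrib_left mult.assoc intro!: sum.cong)
  also have "\<dots> = (\<Sum>j<n. \<Sum>i<n. cnj (u $ i) * H $$ (i,j) * v $ j)"
    by (rule sum.swap)
  also have "\<dots> = (\<Sum>j<n. \<Sum>i<n. v $ j * (cnj (H $$ (j,i)) * cnj (u $ i)))"
  proof (intro sum.cong refl)
    fix i j assume "j \<in> {..<n}" "i \<in> {..<n}"
    then have e: "H $$ (i,j) = cnj (H $$ (j,i))" using hs[of j i] by simp
    show "cnj (u $ i) * H $$ (i,j) * v $ j = v $ j * (cnj (H $$ (j,i)) * cnj (u $ i))"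
      unfolding e by (simp add: mult_ac)
  qed
  also have "\<dots> = (\<Sum>j<n. cnj (cnj (v $ j) * (\<Sum>i<n. H $$ (j,i) * u $ i)))"
    by (simp add: sum_distrib_left mult_ac)
  also have "\<dots> = cnj (ip v (H *\<^sub>v u))"
    unfolding ip_def using Hc u v by (auto simp: mv_index row_sprod intro!: sum.cong)
  finally show ?thesis .
qed

lemma nrm_ip: "nrm v = Re (ip v v)"
  by (simp add: ip_self)

lemma qf_add: assumes H: "hermit H n" and u: "u \<in> carrier_vec n" and w: "w \<in> carrier_vec n"
  shows "qf H (u + w) = qf H u + qf H w + 2 * Re (ip w (H *\<^sub>v u))"
proof -
  have Hc: "H \<in> carrier_mat n n" using H unfolding hermit_def by auto
  have "ip (u + w) (H *\<^sub>v (u + w)) = ip u (H *\<^sub>v u) + ip u (H *\<^sub>v w) + ip w (H *\<^sub>v u) + ip w (H *\<^sub>v w)"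
    using Hc u w by (simp add: mult_add_distrib_mat_vec ip_add_left ip_add_right)
  moreover have "Re (ip u (H *\<^sub>v w)) = Re (ip w (H *\<^sub>v u))"
    using herm_ip[OF H u w] by simp
  ultimately show ?thesis unfolding qf_def by simp
qed

lemma nrm_add: assumes u: "u \<in> carrier_vec n" and w: "w \<in> carrier_vec n"
  shows "nrm (u + w) = nrm u + nrm w + 2 * Re (ip w u)"
proof -
  have "ip (u + w) (u + w) = ip u u + ip u w + ip w u + ip w w"
    using u w by (simp add: ip_add_left ip_add_right)
  moreover have "Re (ip u w) = Re (ip w u)" using ip_conj[OF u w] by simp
  ultimately show ?thesis unfolding nrm_ip by simp
qed

lemma qf_smult: assumes H: "H \<in> carrier_mat n n" and w: "w \<in> carrier_vec n"
  shows "qf H (complex_of_real t \<cdot>\<^sub>v w) = t\<^sup>2 * qf H w"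
  unfolding qf_def using H w
  by (simp add: mult_mat_vec ip_smult_left ip_smult_right power2_eq_square)

lemma nrm_smult: assumes w: "w \<in> carrier_vec n"
  shows "nrm (complex_of_real t \<cdot>\<^sub>v w) = t\<^sup>2 * nrm w"
  unfolding nrm_ip using w
  by (simp add: ip_smult_left ip_smult_right power2_eq_square)



lemma rayleigh_max:
  assumes H: "H \<in> carrier_mat n n" and n: "n > 0"
  shows "\<exists>u\<in>carrier_vec n. nrm u = 1 \<and> (\<forall>v\<in>carrier_vec n. nrm v = 1 \<longrightarrow> qf H v \<le> qf H u)"
proof -
  define F :: "(nat \<Rightarrow> complex) \<Rightarrow> real" where
    "F f = Re (\<Sum>i<n. cnj (f i) * (\<Sum>j<n. H $$ (i,j) * f j))" for f
  have F: "F f = qf H (vec n f)" for f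
    unfolding F_def qf_def ip_def using H by (auto simp: mv_index row_sprod intro!: sum.cong)
  define T :: "complex set" where
    "T = (\<lambda>p. complex_of_real (fst p) + \<i> * complex_of_real (snd p)) ` ({-1..1} \<times> {-1..1})"
  have cT: "compact T" unfolding T_def
    by (intro compact_continuous_image compact_Times compact_Icc continuous_intros)
  have inT: "z \<in> T" if "cmod z \<le> 1" for z
  proof -
    have "\<bar>Re z\<bar> \<le> 1" "\<bar>Im z\<bar> \<le> 1" using that abs_Re_le_cmod abs_Im_le_cmod order_trans by blast+
    then show ?thesis unfolding T_def
      by (intro image_eqI[of _ _ "(Re z, Im z)"]) (auto simp: complex_eq_iff)
  qed
  define K :: "(nat \<Rightarrow> complex) set" where
    "K = Pi\<^sub>E UNIV (\<lambda>i. if i < n then T else {0})"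
  define S where "S = K \<inter> {f. (\<Sum>i<n. (cmod (f i))\<^sup>2) = 1}"
  have cK: "compact K"
  proof -
    have "compactin (product_topology (\<lambda>i. euclidean) UNIV) K"
      unfolding K_def by (subst compactin_PiE) (auto simp: cT)
    then show ?thesis by (simp add: euclidean_product_topology)
  qed
  have contc: "continuous_on A (\<lambda>f::nat \<Rightarrow> complex. f i)" for i A
    by (rule continuous_on_subset[OF continuous_on_product_coordinates]) auto
  have "closed {f::nat\<Rightarrow>complex. (\<Sum>i<n. (cmod (f i))\<^sup>2) = 1}"
    by (intro closed_Collect_eq continuous_intros contc)
  then have cS: "compact S" unfolding S_def using cK by (rule compact_Int_closed[rotated])
  have contF: "continuous_on S F"
    unfolding F_def by (intro continuous_intros contc)
  have mem: "(\<lambda>i. if i < n then v $ i else 0) \<in> S" if "v \<in> carrier_vec n" "nrm v = 1" for v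
  proof -
    have s: "(\<Sum>i<n. (cmod (v $ i))\<^sup>2) = 1" using that unfolding nrm_def by simp
    have "cmod (v $ i) \<le> 1" if i: "i < n" for i
    proof -
      have "(cmod (v $ i))\<^sup>2 \<le> (\<Sum>i<n. (cmod (v $ i))\<^sup>2)"
        by (rule member_le_sum) (use i in auto)
      then have "(cmod (v $ i))\<^sup>2 \<le> 1\<^sup>2" using s by simp
      then show ?thesis by (rule power2_le_imp_le) simp
    qed
    then show ?thesis unfolding S_def K_def using s inT by (auto simp: PiE_iff)
  qed
  have vv: "vec n (\<lambda>i. if i < n then v $ i else 0) = v" if "v \<in> carrier_vec n" for v
    using that by auto
  have "(\<Sum>i<n. (cmod (if i = 0 then 1 else 0::complex))\<^sup>2) = (\<Sum>i<n. if i = 0 then 1 else 0::real)"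
    by (intro sum.cong) auto
  also have "\<dots> = 1" using n by (simp add: sum.delta)
  finally have ne: "S \<noteq> {}" using mem[of "unit_vec n 0"] n
    unfolding nrm_def by auto
  obtain f0 where f0: "f0 \<in> S" and mx: "\<And>g. g \<in> S \<Longrightarrow> F g \<le> F f0"
    using continuous_attains_sup[OF cS ne contF] by blast
  define u where "u = vec n f0"
  have u: "u \<in> carrier_vec n" unfolding u_def by simp
  have nu: "nrm u = 1" using f0 unfolding S_def u_def nrm_def by simp
  show ?thesis
  proof (intro bexI conjI ballI impI)
    fix v :: "complex vec" assume v: "v \<in> carrier_vec n" "nrm v = 1"
    have "F (\<lambda>i. if i < n then v $ i else 0) \<le> F f0" by (rule mx[OF mem[OF v]])
    then show "qf H v \<le> qf H u" unfolding F u_def vv[OF v(1)] .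
  qed (use u nu in auto)
qed

lemma quad_zero: fixes a b :: real
  assumes b: "b \<ge> 0" and a: "a \<ge> 0" and h: "\<And>t. 0 \<le> t\<^sup>2 * b + 2 * t * a"
  shows "a = 0"
proof (rule ccontr)
  assume "a \<noteq> 0" then have ap: "a > 0" using a by simp
  define t where "t = - a / (b + 1)"
  have "0 \<le> t\<^sup>2 * b + 2 * t * a" by (rule h)
  then have "0 \<le> (t\<^sup>2 * b + 2 * t * a) * (b + 1)\<^sup>2" using b by simp
  also have "\<dots> = b * (t * (b + 1))\<^sup>2 + 2 * a * (b + 1) * (t * (b + 1))"
    by (simp add: power2_eq_square algebra_simps)
  also have "t * (b + 1) = - a" unfolding t_def using b by simp
  also have "b * (- a)\<^sup>2 + 2 * a * (b + 1) * (- a) = a\<^sup>2 * b - 2 * a\<^sup>2 * (b + 1)"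
    by (simp add: power2_eq_square algebra_simps)
  also have "\<dots> = - (a\<^sup>2 * (b + 2))" by (simp add: algebra_simps)
  finally have "a\<^sup>2 * (b + 2) \<le> 0" by simp
  moreover have "a\<^sup>2 * (b + 2) > 0" using ap b by simp
  ultimately show False by simp
qed

lemma qf_zero: "H \<in> carrier_mat n n \<Longrightarrow> qf H (0\<^sub>v n) = 0"
  unfolding qf_def ip_def by simp

lemma herm_top_eig:
  assumes H: "hermit H n" and n: "n > 0"
  shows "\<exists>lam. eigenvalue H (complex_of_real lam) \<and> (\<forall>v\<in>carrier_vec n. qf H v \<le> lam * nrm v)"
proof -
  have Hc: "H \<in> carrier_mat n n" using H unfolding hermit_def by blast
  obtain u where u: "u \<in> carrier_vec n" and nu: "nrm u = 1"
    and mx: "\<And>v. v \<in> carrier_vec n \<Longrightarrow> nrm v = 1 \<Longrightarrow> qf H v \<le> qf H u"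
    using rayleigh_max[OF Hc n] by blast
  define lam where "lam = qf H u"
  have bnd: "qf H v \<le> lam * nrm v" if v: "v \<in> carrier_vec n" for v
  proof (cases "nrm v = 0")
    case True
    then have "v = 0\<^sub>v n" using nrm_zero[OF v] by simp
    then show ?thesis using qf_zero[OF Hc] True by simp
  next
    case False
    then have pos: "nrm v > 0" using nrm_nonneg[of v] by simp
    define c where "c = 1 / sqrt (nrm v)"
    have c2: "c\<^sup>2 = 1 / nrm v" unfolding c_def using pos by (simp add: power_divide)
    have w: "complex_of_real c \<cdot>\<^sub>v v \<in> carrier_vec n" using v by simp
    have "nrm (complex_of_real c \<cdot>\<^sub>v v) = 1" using nrm_smult[OF v] c2 pos by simp
    then have "qf H (complex_of_real c \<cdot>\<^sub>v v) \<le> lam" unfolding lam_def by (rule mx[OF w])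
    then have "qf H v / nrm v \<le> lam" using qf_smult[OF Hc v] c2 by simp
    then show ?thesis using pos by (simp add: divide_le_eq mult.commute)
  qed
  define R where "R v = lam * nrm v - qf H v" for v
  have R0: "R v \<ge> 0" if "v \<in> carrier_vec n" for v using bnd[OF that] unfolding R_def by simp
  have Ru: "R u = 0" unfolding R_def lam_def nu by simp
  define w where "w = complex_of_real lam \<cdot>\<^sub>v u - H *\<^sub>v u"
  have w: "w \<in> carrier_vec n" unfolding w_def using u Hc by simp
  have key: "R (u + complex_of_real t \<cdot>\<^sub>v w) = t\<^sup>2 * R w + 2 * t * nrm w" for t
  proof -
    have tw: "complex_of_real t \<cdot>\<^sub>v w \<in> carrier_vec n" using w by simp
    have Hu: "H *\<^sub>v u \<in> carrier_vec n" using Hc u by simp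
    have lu: "complex_of_real lam \<cdot>\<^sub>v u \<in> carrier_vec n" using u by simp
    have e1: "nrm (u + complex_of_real t \<cdot>\<^sub>v w) = nrm u + t\<^sup>2 * nrm w + 2 * (t * Re (ip w u))"
      using nrm_add[OF u tw] nrm_smult[OF w] ip_smult_left[OF w u] by simp
    have e2: "qf H (u + complex_of_real t \<cdot>\<^sub>v w) = qf H u + t\<^sup>2 * qf H w + 2 * (t * Re (ip w (H *\<^sub>v u)))"
      using qf_add[OF H u tw] qf_smult[OF Hc w] ip_smult_left[OF w Hu] by simp
    have e3: "Re (ip w w) = lam * Re (ip w u) - Re (ip w (H *\<^sub>v u))"
    proof -
      have "ip w w = ip w (complex_of_real lam \<cdot>\<^sub>v u) - ip w (H *\<^sub>v u)"
        unfolding w_def[symmetric] using ip_minus_right[OF w lu Hu] unfolding w_def by simp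
      also have "\<dots> = complex_of_real lam * ip w u - ip w (H *\<^sub>v u)"
        using ip_smult_right[OF w u] by simp
      finally show ?thesis by simp
    qed
    show ?thesis unfolding R_def e1 e2 nrm_ip[of w] e3
      using Ru unfolding R_def by (simp add: algebra_simps)
  qed
  have "nrm w = 0"
  proof (rule quad_zero[OF R0[OF w] nrm_nonneg])
    fix t :: real
    have "u + complex_of_real t \<cdot>\<^sub>v w \<in> carrier_vec n" using u w by simp
    from R0[OF this] show "0 \<le> t\<^sup>2 * R w + 2 * t * nrm w" unfolding key .
  qed
  then have "w = 0\<^sub>v n" using nrm_zero[OF w] by simp
  then have w0: "w = 0\<^sub>v n" .
  have Hu: "H *\<^sub>v u = complex_of_real lam \<cdot>\<^sub>v u"
  proof (rule eq_vecI)
    fix i assume "i < dim_vec (complex_of_real lam \<cdot>\<^sub>v u)"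
    then have i: "i < n" using u by simp
    have "w $ i = 0" using w0 i by simp
    then show "(H *\<^sub>v u) $ i = (complex_of_real lam \<cdot>\<^sub>v u) $ i"
      unfolding w_def using i u Hc by simp
  qed (use u Hc in simp)
  have "u \<noteq> 0\<^sub>v n" using nu unfolding nrm_def by auto
  then have "eigenvalue H (complex_of_real lam)"
    unfolding eigenvalue_def eigenvector_def using u Hu Hc by auto
  then show ?thesis using bnd by blast
qed



lemma cs: assumes u: "u \<in> carrier_vec n" and v: "v \<in> carrier_vec n"
  shows "cmod (ip u v) \<le> sqrt (nrm u) * sqrt (nrm v)"
proof -
  have "cmod (ip u v) \<le> (\<Sum>i<n. cmod (cnj (u $ i) * v $ i))"
    unfolding ip_def using v by (simp add: norm_sum)
  also have "\<dots> = (\<Sum>i<n. \<bar>cmod (u $ i)\<bar> * \<bar>cmod (v $ i)\<bar>)"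
    by (simp add: norm_mult)
  also have "\<dots> \<le> L2_set (\<lambda>i. cmod (u $ i)) {..<n} * L2_set (\<lambda>i. cmod (v $ i)) {..<n}"
    by (rule L2_set_mult_ineq)
  also have "\<dots> = sqrt (nrm u) * sqrt (nrm v)"
    unfolding L2_set_def nrm_def using u v by simp
  finally show ?thesis .
qed

lemma adjmul_index: assumes N: "N \<in> carrier_mat k n" and i: "i < n" and j: "j < n"
  shows "(mat_adjoint N * N) $$ (i,j) = (\<Sum>l<k. cnj (N $$ (l,i)) * N $$ (l,j))"
  using N i j adj_carrier[OF N]
  by (auto simp: scalar_prod_def adj_index atLeast0LessThan intro!: sum.cong)

lemma adjmul_hermit: assumes N: "N \<in> carrier_mat k n"
  shows "hermit (mat_adjoint N * N) n"
  unfolding hermit_def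
proof (intro conjI allI impI)
  show "mat_adjoint N * N \<in> carrier_mat n n" using N adj_carrier[OF N] by simp
  fix i j assume i: "i < n" and j: "j < n"
  show "(mat_adjoint N * N) $$ (j, i) = cnj ((mat_adjoint N * N) $$ (i, j))"
    unfolding adjmul_index[OF N j i] adjmul_index[OF N i j] by (simp add: mult.commute)
qed

lemma qf_adjmul: assumes N: "N \<in> carrier_mat k n" and v: "v \<in> carrier_vec n"
  shows "qf (mat_adjoint N * N) v = nrm (N *\<^sub>v v)"
proof -
  have "mat_adjoint N * N *\<^sub>v v = mat_adjoint N *\<^sub>v (N *\<^sub>v v)"
    using N v adj_carrier[OF N] by (simp add: assoc_mult_mat_vec)
  then show ?thesis unfolding qf_def using ip_adj[OF N v, of "N *\<^sub>v v"] N v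
    by (simp add: nrm_ip)
qed

lemma spec_bound: assumes N: "N \<in> carrier_mat k n" and n: "n > 0" and v: "v \<in> carrier_vec n"
  shows "sqrt (nrm (N *\<^sub>v v)) \<le> spec_norm N * sqrt (nrm v)"
proof -
  let ?H = "mat_adjoint N * N"
  have Hc: "?H \<in> carrier_mat n n" using N adj_carrier[OF N] by simp
  obtain lam where ev: "eigenvalue ?H (complex_of_real lam)"
    and bd: "\<And>v. v \<in> carrier_vec n \<Longrightarrow> qf ?H v \<le> lam * nrm v"
    using herm_top_eig[OF adjmul_hermit[OF N] n] by blast
  define S where "S = {\<mu>::real. eigenvalue ?H (complex_of_real \<mu>)}"
  have fS: "finite S"
  proof -
    have "S = complex_of_real -` spectrum ?H" unfolding S_def spectrum_def by auto
    then show ?thesis using card_finite_spectrum(1)[OF Hc]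
      by (metis finite_vimageI inj_of_real)
  qed
  have lS: "lam \<in> S" unfolding S_def using ev by simp
  then have lM: "lam \<le> Max S" using fS by simp
  have l0: "lam \<ge> 0"
  proof -
    obtain w where w: "w \<in> carrier_vec n" "w \<noteq> 0\<^sub>v n" "?H *\<^sub>v w = complex_of_real lam \<cdot>\<^sub>v w"
      using ev Hc unfolding eigenvalue_def eigenvector_def by auto
    have "qf ?H w = lam * nrm w"
      unfolding qf_def w(3) using ip_smult_right[OF w(1) w(1)] by (simp add: nrm_ip)
    moreover have "qf ?H w \<ge> 0" using qf_adjmul[OF N w(1)] nrm_nonneg by simp
    moreover have "nrm w > 0" using nrm_zero[OF w(1)] w(2) nrm_nonneg[of w] by force
    ultimately show ?thesis by (simp add: zero_le_mult_iff)
  qed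
  have sn: "spec_norm N = sqrt (Max S)" unfolding spec_norm_def S_def ..
  have "nrm (N *\<^sub>v v) \<le> lam * nrm v" using bd[OF v] qf_adjmul[OF N v] by simp
  also have "\<dots> \<le> Max S * nrm v" using lM nrm_nonneg[of v] by (rule mult_right_mono)
  finally have "sqrt (nrm (N *\<^sub>v v)) \<le> sqrt (Max S * nrm v)" by simp
  then show ?thesis unfolding sn by (simp add: real_sqrt_mult)
qed

lemma bil_bound: assumes N: "N \<in> carrier_mat k n" and n: "n > 0"
  and u: "u \<in> carrier_vec k" and v: "v \<in> carrier_vec n"
  shows "cmod (ip u (N *\<^sub>v v)) \<le> spec_norm N * sqrt (nrm u) * sqrt (nrm v)"
proof -
  have Nv: "N *\<^sub>v v \<in> carrier_vec k" using N v by simp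
  have "cmod (ip u (N *\<^sub>v v)) \<le> sqrt (nrm u) * sqrt (nrm (N *\<^sub>v v))" by (rule cs[OF u Nv])
  also have "\<dots> \<le> sqrt (nrm u) * (spec_norm N * sqrt (nrm v))"
    by (rule mult_left_mono[OF spec_bound[OF N n v]]) (simp add: nrm_nonneg)
  finally show ?thesis by (simp add: mult_ac)
qed



lemma cb_carrier: "M \<in> carrier_mat L L' \<Longrightarrow> col_block d M l \<in> carrier_mat L d"
  by (simp add: col_block_def)

lemma cb_index: "i < dim_row M \<Longrightarrow> j < d \<Longrightarrow> col_block d M l $$ (i,j) = M $$ (i, l*d+j)"
  by (simp add: col_block_def)

lemma vb_carrier: "vec_block d a l \<in> carrier_vec d"
  by (simp add: vec_block_def)

lemma vb_index: "j < d \<Longrightarrow> vec_block d a l $ j = a $ (l*d+j)"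
  by (simp add: vec_block_def)

lemma reindex: fixes f :: "nat \<Rightarrow> 'a::comm_monoid_add" shows "(\<Sum>k<R*d. f k) = (\<Sum>l<R. \<Sum>j<d. f (l*d+j))"
proof -
  have "(\<Sum>k<R*d. f k) = (\<Sum>l<R. sum f {l*d..<l*d+d})" using sum.nat_group[of f d R] by simp
  also have "\<dots> = (\<Sum>l<R. \<Sum>j<d. f (l*d+j))"
  proof (rule sum.cong[OF refl])
    fix l
    have "sum f {l*d..<l*d+d} = sum f {0 + l*d..<d + l*d}" by (simp add: add.commute)
    also have "\<dots> = (\<Sum>j=0..<d. f (j + l*d))" by (rule sum.shift_bounds_nat_ivl)
    finally show "sum f {l*d..<l*d+d} = (\<Sum>j<d. f (l*d+j))" by (simp add: atLeast0LessThan add.commute)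
  qed
  finally show ?thesis .
qed

lemma blocks_mv: assumes M: "M \<in> carrier_mat L L" and L: "L = R * d" and a: "a \<in> carrier_vec L"
  and i: "i < L"
  shows "(M *\<^sub>v a) $ i = (\<Sum>l<R. (col_block d M l *\<^sub>v vec_block d a l) $ i)"
proof -
  have "(M *\<^sub>v a) $ i = (\<Sum>k<R*d. M $$ (i,k) * a $ k)" using mv_index[OF M a i] L by simp
  also have "\<dots> = (\<Sum>l<R. \<Sum>j<d. M $$ (i,l*d+j) * a $ (l*d+j))" by (rule reindex)
  also have "\<dots> = (\<Sum>l<R. (col_block d M l *\<^sub>v vec_block d a l) $ i)"
  proof (intro sum.cong refl)
    fix l
    have "(col_block d M l *\<^sub>v vec_block d a l) $ i = (\<Sum>j<d. col_block d M l $$ (i,j) * vec_block d a l $ j)"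
      by (rule mv_index[OF cb_carrier[OF M] vb_carrier i])
    also have "\<dots> = (\<Sum>j<d. M $$ (i,l*d+j) * a $ (l*d+j))"
      using M i by (intro sum.cong refl) (simp add: cb_index vb_index)
    finally show "(\<Sum>j<d. M $$ (i,l*d+j) * a $ (l*d+j)) = (col_block d M l *\<^sub>v vec_block d a l) $ i" by simp
  qed
  finally show ?thesis .
qed

lemma nrm_blocks: assumes a: "a \<in> carrier_vec (R*d)"
  shows "(\<Sum>l<R. nrm (vec_block d a l)) = nrm a"
proof -
  have "(\<Sum>l<R. nrm (vec_block d a l)) = (\<Sum>l<R. \<Sum>j<d. (cmod (a $ (l*d+j)))\<^sup>2)"
    unfolding nrm_def by (auto simp: vb_index vec_block_def intro!: sum.cong)
  also have "\<dots> = nrm a" unfolding nrm_def using a by (simp add: reindex)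
  finally show ?thesis .
qed

lemma nrm_unitary: assumes U: "unitary_mat L U" and a: "a \<in> carrier_vec L"
  shows "nrm (U *\<^sub>v a) = nrm a"
proof -
  have Uc: "U \<in> carrier_mat L L" and UU: "mat_adjoint U * U = 1\<^sub>m L"
    using U unfolding unitary_mat_def by auto
  have Ua: "U *\<^sub>v a \<in> carrier_vec L" using Uc a by simp
  have "ip (U *\<^sub>v a) (U *\<^sub>v a) = ip a (mat_adjoint U *\<^sub>v (U *\<^sub>v a))"
    using ip_adj[OF Uc a Ua] by simp
  also have "mat_adjoint U *\<^sub>v (U *\<^sub>v a) = (mat_adjoint U * U) *\<^sub>v a"
    using Uc a adj_carrier[OF Uc] by (simp add: assoc_mult_mat_vec)
  also have "\<dots> = a" unfolding UU using a by simp
  finally show ?thesis unfolding nrm_ip by simp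
qed

lemma supp_bound: fixes \<alpha> :: "nat \<Rightarrow> real"
  assumes nn: "\<And>l. \<alpha> l \<ge> 0"
  shows "(\<Sum>l<R. \<alpha> l) \<le> sqrt (card {l. l < R \<and> \<alpha> l > 0}) * sqrt (\<Sum>l<R. (\<alpha> l)\<^sup>2)"
proof -
  define S where "S = {l. l < R \<and> \<alpha> l > 0}"
  have SR: "S \<subseteq> {..<R}" and fS: "finite S" unfolding S_def by auto
  have "(\<Sum>l<R. \<alpha> l) = (\<Sum>l\<in>S. \<alpha> l)"
    using nn SR by (intro sum.mono_neutral_right) (auto simp: S_def not_less intro: antisym)
  also have "\<dots> = (\<Sum>l\<in>S. \<bar>1\<bar> * \<bar>\<alpha> l\<bar>)" using nn by simp
  also have "\<dots> \<le> L2_set (\<lambda>_. 1) S * L2_set \<alpha> S" by (rule L2_set_mult_ineq)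
  also have "L2_set (\<lambda>_. 1) S = sqrt (card S)" unfolding L2_set_def by simp
  also have "L2_set \<alpha> S \<le> sqrt (\<Sum>l<R. (\<alpha> l)\<^sup>2)"
    unfolding L2_set_def by (intro real_sqrt_le_mono sum_mono2) (use SR in auto)
  finally show ?thesis unfolding S_def[symmetric]
    by (meson mult_left_mono order_trans real_sqrt_ge_zero of_nat_0_le_iff)
qed



lemma vnorm2_nrm: "vnorm2 v = sqrt (nrm v)"
  unfolding vnorm2_def nrm_def ..

lemma spec_norm_nonneg: assumes N: "N \<in> carrier_mat k n" and n: "n > 0"
  shows "spec_norm N \<ge> 0"
proof -
  let ?H = "mat_adjoint N * N"
  have Hc: "?H \<in> carrier_mat n n" using N adj_carrier[OF N] by simp
  obtain lam where ev: "eigenvalue ?H (complex_of_real lam)"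
    using herm_top_eig[OF adjmul_hermit[OF N] n] by blast
  define S where "S = {\<mu>::real. eigenvalue ?H (complex_of_real \<mu>)}"
  have fS: "finite S"
  proof -
    have "S = complex_of_real -` spectrum ?H" unfolding S_def spectrum_def by auto
    then show ?thesis using card_finite_spectrum(1)[OF Hc]
      by (metis finite_vimageI inj_of_real)
  qed
  have lS: "lam \<in> S" unfolding S_def using ev by simp
  then have lM: "lam \<le> Max S" using fS by simp
  have l0: "lam \<ge> 0"
  proof -
    obtain w where w: "w \<in> carrier_vec n" "w \<noteq> 0\<^sub>v n" "?H *\<^sub>v w = complex_of_real lam \<cdot>\<^sub>v w"
      using ev Hc unfolding eigenvalue_def eigenvector_def by auto
    have "qf ?H w = lam * nrm w"
      unfolding qf_def w(3) using ip_smult_right[OF w(1) w(1)] by (simp add: nrm_ip)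
    moreover have "qf ?H w \<ge> 0" using qf_adjmul[OF N w(1)] nrm_nonneg by simp
    moreover have "nrm w > 0" using nrm_zero[OF w(1)] w(2) nrm_nonneg[of w] by force
    ultimately show ?thesis by (simp add: zero_le_mult_iff)
  qed
  show ?thesis unfolding spec_norm_def S_def[symmetric] using l0 lM by simp
qed

lemma coh_bound: assumes d: "d > 0" and l: "l < R" and r: "r < R"
  shows "spec_norm (mat_adjoint (col_block d Phi l) * col_block d Psi r) \<le> real d * block_coherence R d Phi Psi"
proof -
  define T where "T = {spec_norm (mat_adjoint (col_block d Phi l) * col_block d Psi r) / real d | l r. l < R \<and> r < R}"
  have fT: "finite T" unfolding T_def by (rule finite_image_set2) auto
  have "spec_norm (mat_adjoint (col_block d Phi l) * col_block d Psi r) / real d \<in> T"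
    unfolding T_def using l r by blast
  then have "spec_norm (mat_adjoint (col_block d Phi l) * col_block d Psi r) / real d \<le> Max T"
    using fT by simp
  then show ?thesis unfolding block_coherence_def T_def[symmetric] using d
    by (simp add: divide_le_eq mult.commute)
qed

theorem theorem1:
  fixes R d L :: nat and Phi Psi :: "complex mat" and x a b :: "complex vec"
  assumes "R > 0" and "d > 0" and "L = R * d"
    and "unitary_mat L Phi" and "unitary_mat L Psi"
    and "x \<in> carrier_vec L" and "a \<in> carrier_vec L" and "b \<in> carrier_vec L"
    and "x \<noteq> 0\<^sub>v L"
    and "\<forall>i<L. x $ i = (\<Sum>l<R. (col_block d Phi l *\<^sub>v vec_block d a l) $ i)"
    and "\<forall>i<L. x $ i = (\<Sum>l<R. (col_block d Psi l *\<^sub>v vec_block d b l) $ i)"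
  shows "(real (norm20 R d a) + real (norm20 R d b)) / 2
           \<ge> sqrt (real (norm20 R d a) * real (norm20 R d b))
       \<and> sqrt (real (norm20 R d a) * real (norm20 R d b))
           \<ge> 1 / (real d * block_coherence R d Phi Psi)"
proof -
  note Rp = assms(1) and dp = assms(2) and L = assms(3) and UPhi = assms(4) and UPsi = assms(5)
    and x = assms(6) and a = assms(7) and b = assms(8) and x0 = assms(9)
    and xa = assms(10) and xb = assms(11)
  have Phic: "Phi \<in> carrier_mat L L" and Psic: "Psi \<in> carrier_mat L L"
    using UPhi UPsi unfolding unitary_mat_def by auto
  define A where "A = real (norm20 R d a)"
  define B where "B = real (norm20 R d b)"
  define M where "M = real d * block_coherence R d Phi Psi"
  define p where "p l = col_block d Phi l *\<^sub>v vec_block d a l" for l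
  define q where "q r = col_block d Psi r *\<^sub>v vec_block d b r" for r
  define \<alpha> where "\<alpha> l = sqrt (nrm (vec_block d a l))" for l
  define \<beta> where "\<beta> r = sqrt (nrm (vec_block d b r))" for r
  have pc: "p l \<in> carrier_vec L" for l unfolding p_def by (rule mult_mat_vec_carrier[OF cb_carrier[OF Phic] vb_carrier])
  have qc: "q r \<in> carrier_vec L" for r unfolding q_def by (rule mult_mat_vec_carrier[OF cb_carrier[OF Psic] vb_carrier])
  have xPhi: "x = Phi *\<^sub>v a"
  proof (rule eq_vecI)
    fix i assume "i < dim_vec (Phi *\<^sub>v a)" then have i: "i < L" using Phic by simp
    show "x $ i = (Phi *\<^sub>v a) $ i" using xa i blocks_mv[OF Phic L a i] by simp
  qed (use x Phic in simp)
  have xPsi: "x = Psi *\<^sub>v b"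
  proof (rule eq_vecI)
    fix i assume "i < dim_vec (Psi *\<^sub>v b)" then have i: "i < L" using Psic by simp
    show "x $ i = (Psi *\<^sub>v b) $ i" using xb i blocks_mv[OF Psic L b i] by simp
  qed (use x Psic in simp)
  have na: "nrm a = nrm x" using nrm_unitary[OF UPhi a] xPhi by simp
  have nb: "nrm b = nrm x" using nrm_unitary[OF UPsi b] xPsi by simp
  have nxpos: "nrm x > 0" using nrm_zero[OF x] x0 nrm_nonneg[of x] by force
  have exp: "ip x x = (\<Sum>l<R. \<Sum>r<R. ip (p l) (q r))"
  proof -
    have "ip x x = (\<Sum>i<L. cnj (\<Sum>l<R. p l $ i) * (\<Sum>r<R. q r $ i))"
      unfolding ip_def
    proof (rule sum.cong)
      show "{..<dim_vec x} = {..<L}" using x by simp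
    next
      fix i assume "i \<in> {..<L}"
      then have e1: "x $ i = (\<Sum>l<R. p l $ i)" and e2: "x $ i = (\<Sum>r<R. q r $ i)"
        using xa xb unfolding p_def q_def by auto
      show "cnj (x $ i) * x $ i = cnj (\<Sum>l<R. p l $ i) * (\<Sum>r<R. q r $ i)"
        using e1 e2 by metis
    qed
    also have "\<dots> = (\<Sum>i<L. \<Sum>r<R. \<Sum>l<R. cnj (p l $ i) * q r $ i)"
      by (simp add: sum_distrib_left sum_distrib_right)
    also have "\<dots> = (\<Sum>r<R. \<Sum>i<L. \<Sum>l<R. cnj (p l $ i) * q r $ i)"
      by (rule sum.swap)
    also have "\<dots> = (\<Sum>r<R. \<Sum>l<R. \<Sum>i<L. cnj (p l $ i) * q r $ i)"
      by (rule sum.cong[OF refl]) (rule sum.swap)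
    also have "\<dots> = (\<Sum>l<R. \<Sum>r<R. \<Sum>i<L. cnj (p l $ i) * q r $ i)"
      by (rule sum.swap)
    also have "\<dots> = (\<Sum>l<R. \<Sum>r<R. ip (p l) (q r))"
    proof -
      have qd: "dim_vec (q r) = L" for r using qc[of r] by simp
      show ?thesis unfolding ip_def by (simp add: qd)
    qed
    finally show ?thesis .
  qed
  have bb: "cmod (ip (p l) (q r)) \<le> M * \<alpha> l * \<beta> r" if l: "l < R" and r: "r < R" for l r
  proof -
    let ?P = "col_block d Phi l" and ?Q = "col_block d Psi r"
    let ?N = "mat_adjoint ?P * ?Q"
    have P: "?P \<in> carrier_mat L d" using cb_carrier[OF Phic] .
    have Q: "?Q \<in> carrier_mat L d" using cb_carrier[OF Psic] .
    have N: "?N \<in> carrier_mat d d" using adj_carrier[OF P] Q by simp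
    have Qb: "?Q *\<^sub>v vec_block d b r \<in> carrier_vec L" by (rule mult_mat_vec_carrier[OF Q vb_carrier])
    have "ip (p l) (q r) = ip (vec_block d a l) (mat_adjoint ?P *\<^sub>v (?Q *\<^sub>v vec_block d b r))"
      unfolding p_def q_def using ip_adj[OF P vb_carrier Qb] by simp
    also have "mat_adjoint ?P *\<^sub>v (?Q *\<^sub>v vec_block d b r) = ?N *\<^sub>v vec_block d b r"
      using adj_carrier[OF P] Q vb_carrier by (simp add: assoc_mult_mat_vec)
    finally have "cmod (ip (p l) (q r)) = cmod (ip (vec_block d a l) (?N *\<^sub>v vec_block d b r))" by simp
    also have "\<dots> \<le> spec_norm ?N * \<alpha> l * \<beta> r"
      unfolding \<alpha>_def \<beta>_def by (rule bil_bound[OF N dp vb_carrier vb_carrier])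
    also have "\<dots> \<le> M * \<alpha> l * \<beta> r"
      unfolding M_def using coh_bound[OF dp l r, of Phi Psi]
      by (intro mult_right_mono) (auto simp: \<alpha>_def \<beta>_def nrm_nonneg)
    finally show ?thesis .
  qed
  have M0: "M \<ge> 0"
  proof -
    have P0: "col_block d Phi 0 \<in> carrier_mat L d" using cb_carrier[OF Phic] .
    have Q0: "col_block d Psi 0 \<in> carrier_mat L d" using cb_carrier[OF Psic] .
    have "mat_adjoint (col_block d Phi 0) * col_block d Psi 0 \<in> carrier_mat d d"
      using adj_carrier[OF P0] Q0 by simp
    then have "0 \<le> spec_norm (mat_adjoint (col_block d Phi 0) * col_block d Psi 0)"
      by (rule spec_norm_nonneg[OF _ dp])
    then show ?thesis unfolding M_def using coh_bound[OF dp Rp Rp, of Phi Psi] by linarith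
  qed
  have a0: "\<alpha> l \<ge> 0" and b0: "\<beta> l \<ge> 0" for l unfolding \<alpha>_def \<beta>_def by (simp_all add: nrm_nonneg)
  have "nrm x \<le> cmod (ip x x)" by (simp add: ip_self)
  also have "\<dots> \<le> (\<Sum>l<R. \<Sum>r<R. cmod (ip (p l) (q r)))" unfolding exp
    by (rule order_trans[OF norm_sum sum_mono[OF norm_sum]])
  also have "\<dots> \<le> (\<Sum>l<R. \<Sum>r<R. M * \<alpha> l * \<beta> r)"
    using bb by (intro sum_mono) auto
  also have "\<dots> = M * (\<Sum>l<R. \<Sum>r<R. \<alpha> l * \<beta> r)"
    by (simp add: sum_distrib_left mult.assoc)
  also have "(\<Sum>l<R. \<Sum>r<R. \<alpha> l * \<beta> r) = (\<Sum>l<R. \<alpha> l) * (\<Sum>r<R. \<beta> r)"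
    by (simp add: sum_product)
  also have "M * ((\<Sum>l<R. \<alpha> l) * (\<Sum>r<R. \<beta> r)) = M * (\<Sum>l<R. \<alpha> l) * (\<Sum>r<R. \<beta> r)"
    by (simp add: mult.assoc)
  also have "\<dots> \<le> M * (sqrt A * sqrt (nrm x)) * (sqrt B * sqrt (nrm x))"
  proof -
    have sa: "(\<Sum>l<R. \<alpha> l) \<le> sqrt A * sqrt (nrm x)"
    proof -
      have "(\<Sum>l<R. \<alpha> l) \<le> sqrt (card {l. l < R \<and> \<alpha> l > 0}) * sqrt (\<Sum>l<R. (\<alpha> l)\<^sup>2)"
        by (rule supp_bound[OF a0])
      also have "(\<Sum>l<R. (\<alpha> l)\<^sup>2) = nrm x"
        unfolding \<alpha>_def using nrm_nonneg nrm_blocks[of a R d] a L na by simp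
      also have "card {l. l < R \<and> \<alpha> l > 0} = norm20 R d a"
        unfolding norm20_def \<alpha>_def vnorm2_nrm ..
      finally show ?thesis unfolding A_def .
    qed
    have sb: "(\<Sum>r<R. \<beta> r) \<le> sqrt B * sqrt (nrm x)"
    proof -
      have "(\<Sum>l<R. \<beta> l) \<le> sqrt (card {l. l < R \<and> \<beta> l > 0}) * sqrt (\<Sum>l<R. (\<beta> l)\<^sup>2)"
        by (rule supp_bound[OF b0])
      also have "(\<Sum>l<R. (\<beta> l)\<^sup>2) = nrm x"
        unfolding \<beta>_def using nrm_nonneg nrm_blocks[of b R d] b L nb by simp
      also have "card {l. l < R \<and> \<beta> l > 0} = norm20 R d b"
        unfolding norm20_def \<beta>_def vnorm2_nrm ..
      finally show ?thesis unfolding B_def .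
    qed
    have f1: "M * (\<Sum>l<R. \<alpha> l) \<le> M * (sqrt A * sqrt (nrm x))"
      using sa M0 by (rule mult_left_mono)
    have f2: "0 \<le> M * (sqrt A * sqrt (nrm x))" using M0 nrm_nonneg[of x] unfolding A_def by simp
    have f3: "0 \<le> (\<Sum>r<R. \<beta> r)" using b0 by (simp add: sum_nonneg)
    show ?thesis by (rule mult_mono[OF f1 sb f2 f3])
  qed
  also have "\<dots> = (M * sqrt (A * B)) * nrm x"
    using nrm_nonneg[of x] by (simp add: real_sqrt_mult mult_ac)
  finally have "1 * nrm x \<le> (M * sqrt (A * B)) * nrm x" by simp
  then have one: "1 \<le> M * sqrt (A * B)" using nxpos by (rule mult_right_le_imp_le)
  have s0: "sqrt (A * B) \<ge> 0" unfolding A_def B_def by simp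
  have Mp: "M > 0" using one M0 s0 by (cases "M = 0") auto
  have part2: "1 / M \<le> sqrt (A * B)" using one Mp by (simp add: divide_le_eq mult.commute)
  have part1: "sqrt (A * B) \<le> (A + B) / 2" unfolding A_def B_def by (rule arith_geo_mean_sqrt) auto
  show ?thesis using part1 part2 unfolding A_def B_def M_def by simp
qed


end
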